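(* If $G$ is a graph with $\operatorname{box}(G)=b$, then $G$ contains a simple cycle of length at least $b-3$.
   Context: The boxicity $\operatorname{box}(G)$ is the minimum $b$ such that $G$ is the intersection graph of axis-parallel boxes in $\mathbb{R}^b$ (products of $b$ closed intervals), one box per vertex. *)

theory Defs
  imports Complex_Main
begin

definition simple_graph :: "'a set \<Rightarrow> ('a \<Rightarrow> 'a \<Rightarrow> bool) \<Rightarrow> bool" where
  "simple_graph V E \<longleftrightarrow> finite V \<and> (\<forall>x y. E x y \<longrightarrow> x \<in> V \<and> y \<in> V)
     \<and> (\<forall>x y. E x y \<longrightarrow> E y x) \<and> (\<forall>x. \<not> E x x)"

definition box_rep :: "'a set \<Rightarrow> ('a \<Rightarrow> 'a \<Rightarrow> bool) \<Rightarrow> nat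
    \<Rightarrow> (nat \<Rightarrow> 'a \<Rightarrow> real) \<Rightarrow> (nat \<Rightarrow> 'a \<Rightarrow> real) \<Rightarrow> bool" where
  "box_rep V E b l u \<longleftrightarrow> (\<forall>v\<in>V. \<forall>i<b. l i v \<le> u i v) \<and>
     (\<forall>v\<in>V. \<forall>w\<in>V. v \<noteq> w \<longrightarrow>
        (E v w \<longleftrightarrow> (\<forall>i<b. l i v \<le> u i w \<and> l i w \<le> u i v)))"

definition boxicity :: "'a set \<Rightarrow> ('a \<Rightarrow> 'a \<Rightarrow> bool) \<Rightarrow> nat" where
  "boxicity V E = (LEAST b. \<exists>l u. box_rep V E b l u)"

text \<open>A simple cycle, as the cyclic list of its (distinct) vertices; its length is length cs.\<close>
definition simple_cycle :: "'a set \<Rightarrow> ('a \<Rightarrow> 'a \<Rightarrow> bool) \<Rightarrow> 'a list \<Rightarrow> bool" where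
  "simple_cycle V E cs \<longleftrightarrow> distinct cs \<and> 3 \<le> length cs \<and> set cs \<subseteq> V \<and>
     (\<forall>i<length cs. E (cs ! i) (cs ! ((i + 1) mod length cs)))"

end

theory Submission
  imports Defs
begin

locale nfs =
  fixes V :: "'a set" and E :: "'a \<Rightarrow> 'a \<Rightarrow> bool" and anc :: "'a \<Rightarrow> 'a \<Rightarrow> bool"
    and d pre post :: "'a \<Rightarrow> nat"
  assumes anc_V: "\<And>x y. anc x y \<Longrightarrow> x \<in> V \<and> y \<in> V"
  and anc_refl: "\<And>x. x \<in> V \<Longrightarrow> anc x x"
  and anc_trans: "\<And>x y z. anc x y \<Longrightarrow> anc y z \<Longrightarrow> anc x z"
  and anc_strict: "\<And>x y. anc x y \<Longrightarrow> x \<noteq> y \<Longrightarrow> d x < d y \<and> pre x < pre y \<and> post y \<le> post x"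
  and anc_chain: "\<And>x y z. anc x z \<Longrightarrow> anc y z \<Longrightarrow> anc x y \<or> anc y x"
  and parent: "\<And>y. y \<in> V \<Longrightarrow> 0 < d y \<Longrightarrow> \<exists>p. anc p y \<and> d p + 1 = d y \<and> E p y"
  and normal: "\<And>x y. E x y \<Longrightarrow> anc x y \<or> anc y x"
  and pre_post: "\<And>x. x \<in> V \<Longrightarrow> pre x \<le> post x"
  and disj: "\<And>x y. x \<in> V \<Longrightarrow> y \<in> V \<Longrightarrow> \<not> anc x y \<Longrightarrow> \<not> anc y x \<Longrightarrow> post x < pre y \<or> post y < pre x"
begin

lemma anc_exists_aux: "\<forall>y\<in>V. d y = n \<longrightarrow> (\<forall>k\<le>n. \<exists>z. anc z y \<and> d z = k)"
proof (induction n)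
  case 0
  then show ?case using anc_refl by auto
next
  case (Suc n)
  show ?case
  proof (intro ballI impI allI)
    fix y k assume y: "y \<in> V" "d y = Suc n" and k: "k \<le> Suc n"
    show "\<exists>z. anc z y \<and> d z = k"
    proof (cases "k = Suc n")
      case True then show ?thesis using y anc_refl by auto
    next
      case False
      obtain p where p: "anc p y" "d p + 1 = d y" "E p y" using parent[of y] y by auto
      have "p \<in> V" using anc_V[OF p(1)] by auto
      have "d p = n" using p(2) y(2) by simp
      moreover have "k \<le> n" using k False by simp
      ultimately obtain z where "anc z p" "d z = k" using Suc.IH \<open>p \<in> V\<close> by blast
      then show ?thesis using anc_trans p(1) by blast
    qed
  qed
qed

lemma anc_exists: "y \<in> V \<Longrightarrow> k \<le> d y \<Longrightarrow> \<exists>z. anc z y \<and> d z = k"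
  using anc_exists_aux by blast

lemma anc_unique: "anc x z \<Longrightarrow> anc y z \<Longrightarrow> d x = d y \<Longrightarrow> x = y"
  using anc_chain anc_strict by (metis less_irrefl)

end

lemma nf_exists:
  assumes "finite V" "\<And>x y. E x y \<Longrightarrow> x \<in> V \<and> y \<in> V" "\<And>x y. E x y \<Longrightarrow> E y x"
  shows "\<exists>anc d pre post. nfs V E anc d pre post \<and> (\<forall>x y. anc x y \<longrightarrow> d x = 0 \<longrightarrow> (w::'a\<Rightarrow>nat) y \<le> w x)"
  using assms
proof (induction "card V" arbitrary: V E w rule: less_induct)
  case less
  show ?case
  proof (cases "V = {}")
    case True
    have "nfs V E (\<lambda>_ _. False) (\<lambda>_. 0) (\<lambda>_. 0) (\<lambda>_. 0)"
      by unfold_locales (use True less.prems in auto)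
    then show ?thesis by blast
  next
    case False
    have fin: "finite V" and EV: "\<And>x y. E x y \<Longrightarrow> x \<in> V \<and> y \<in> V" and Esym: "\<And>x y. E x y \<Longrightarrow> E y x"
      using less.prems by auto
    have "Max (w ` V) \<in> w ` V" using fin False by auto
    then obtain r where r: "r \<in> V" "w r = Max (w ` V)" by auto
    have rmax: "\<And>v. v \<in> V \<Longrightarrow> w v \<le> w r" using r fin by auto
    define V' where "V' = V - {r}"
    define E' where "E' = (\<lambda>x y. E x y \<and> x \<noteq> r \<and> y \<noteq> r)"
    define w' where "w' = (\<lambda>u. if E r u then w r + 1 else w u)"
    have card: "card V' < card V" using card_Diff1_less[OF fin r(1)] unfolding V'_def .
    have "\<exists>anc d pre post. nfs V' E' anc d pre post \<and> (\<forall>x y. anc x y \<longrightarrow> d x = 0 \<longrightarrow> w' y \<le> w' x)"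
      apply (rule less.hyps[OF card])
      using fin EV Esym unfolding V'_def E'_def by auto
    then obtain anc' d' pre' post' where nf': "nfs V' E' anc' d' pre' post'"
      and wt': "\<And>x y. anc' x y \<Longrightarrow> d' x = 0 \<Longrightarrow> w' y \<le> w' x" by blast
    interpret I: nfs V' E' anc' d' pre' post' by (rule nf')
    define C where "C = {y. \<exists>z. anc' z y \<and> d' z = 0 \<and> E r z}"
    define M where "M = Max (insert 0 (post' ` V'))"
    have finV': "finite V'" using fin V'_def by auto
    have rV': "r \<notin> V'" unfolding V'_def by auto
    have V'V: "V' \<subseteq> V" unfolding V'_def by auto
    have CV: "C \<subseteq> V'" unfolding C_def using I.anc_V by auto
    have postM: "\<And>y. y \<in> V' \<Longrightarrow> post' y \<le> M" unfolding M_def using finV' by auto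
    have wle: "\<And>u. u \<in> V \<Longrightarrow> w u \<le> w' u" unfolding w'_def using rmax by fastforce
    have nbC: "\<And>y. y \<in> V' \<Longrightarrow> E r y \<Longrightarrow> y \<in> C"
    proof -
      fix y assume y: "y \<in> V'" "E r y"
      obtain z where z: "anc' z y" "d' z = 0" using I.anc_exists[OF y(1), of 0] by auto
      have "w' y \<le> w' z" using wt' z by auto
      moreover have "w' y = w r + 1" using y unfolding w'_def by auto
      moreover have "z \<in> V" using I.anc_V[OF z(1)] V'V by auto
      ultimately have "E r z" unfolding w'_def using rmax[of z] by (auto split: if_splits)
      then show "y \<in> C" unfolding C_def using z by auto
    qed
    have Cclos: "\<And>a b. anc' a b \<Longrightarrow> a \<in> C \<longleftrightarrow> b \<in> C"
    proof -
      fix a b assume ab: "anc' a b"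
      show "a \<in> C \<longleftrightarrow> b \<in> C"
      proof
        assume "a \<in> C" then show "b \<in> C" unfolding C_def using ab I.anc_trans by blast
      next
        assume "b \<in> C"
        then obtain z where z: "anc' z b" "d' z = 0" "E r z" unfolding C_def by auto
        have "a \<in> V'" using I.anc_V[OF ab] by auto
        then obtain z' where z': "anc' z' a" "d' z' = 0" using I.anc_exists[of a 0] by auto
        have "anc' z' b" using z'(1) ab I.anc_trans by blast
        then have "z' = z" using I.anc_unique z z' by auto
        then show "a \<in> C" unfolding C_def using z' z by auto
      qed
    qed
    define anc where "anc = (\<lambda>x y. (x = r \<and> (y = r \<or> y \<in> C)) \<or> anc' x y)"
    define d where "d = (\<lambda>y. if y = r then 0 else if y \<in> C then d' y + 1 else d' y)"
    define pre where "pre = (\<lambda>y. if y = r then 0 else if y \<in> C then pre' y + 1 else pre' y + M + 2)"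
    define post where "post = (\<lambda>y. if y = r then M + 1 else if y \<in> C then post' y + 1 else post' y + M + 2)"
    have ancV': "\<And>x y. anc' x y \<Longrightarrow> x \<in> V' \<and> y \<in> V'" using I.anc_V by auto
    have nf: "nfs V E anc d pre post"
    proof unfold_locales
      fix x y assume "anc x y" then show "x \<in> V \<and> y \<in> V"
        unfolding anc_def using r CV V'V ancV' by auto
    next
      fix x assume "x \<in> V" then show "anc x x" unfolding anc_def using I.anc_refl[of x] V'_def by auto
    next
      fix x y z assume a: "anc x y" "anc y z" then show "anc x z"
        unfolding anc_def using Cclos I.anc_trans ancV' rV' by metis
    next
      fix x y assume a: "anc x y" "x \<noteq> y"
      show "d x < d y \<and> pre x < pre y \<and> post y \<le> post x"
      proof (cases "x = r")
        case True
        then have "y \<in> C" using a unfolding anc_def using ancV' rV' by auto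
        then show ?thesis using True CV postM unfolding d_def pre_def post_def using rV' by fastforce
      next
        case False
        then have a': "anc' x y" using a unfolding anc_def by auto
        then have "x \<noteq> r" "y \<noteq> r" using ancV' rV' by auto
        moreover have "x \<in> C \<longleftrightarrow> y \<in> C" using Cclos a' by auto
        ultimately show ?thesis using I.anc_strict[OF a' a(2)] unfolding d_def pre_def post_def by auto
      qed
    next
      fix x y z assume a: "anc x z" "anc y z"
      show "anc x y \<or> anc y x"
      proof (cases "x = r \<or> y = r")
        case True
        then show ?thesis using a unfolding anc_def using Cclos ancV' rV' by metis
      next
        case False
        then show ?thesis using a I.anc_chain unfolding anc_def by metis
      qed
    next
      fix y assume y: "y \<in> V" "0 < d y"
      then have yr: "y \<noteq> r" unfolding d_def by auto
      then have yV': "y \<in> V'" using y V'_def by auto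
      show "\<exists>p. anc p y \<and> d p + 1 = d y \<and> E p y"
      proof (cases "y \<in> C")
        case True
        show ?thesis
        proof (cases "d' y = 0")
          case True
          then obtain z where z: "anc' z y" "d' z = 0" "E r z" using \<open>y \<in> C\<close> unfolding C_def by auto
          have "z = y" using I.anc_unique[OF z(1) I.anc_refl[OF yV']] z(2) True by auto
          then show ?thesis using z yr \<open>y \<in> C\<close> True unfolding anc_def d_def by auto
        next
          case False
          then obtain p where p: "anc' p y" "d' p + 1 = d' y" "E' p y" using I.parent[OF yV'] by auto
          have "p \<in> C" using Cclos p(1) True by auto
          moreover have "p \<noteq> r" using ancV' p(1) rV' by auto
          ultimately show ?thesis using p yr True unfolding anc_def d_def E'_def by auto
        qed
      next
        case False
        then have "0 < d' y" using y yr unfolding d_def by auto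
        then obtain p where p: "anc' p y" "d' p + 1 = d' y" "E' p y" using I.parent[OF yV'] by auto
        have "p \<notin> C" using Cclos p(1) False by auto
        moreover have "p \<noteq> r" using ancV' p(1) rV' by auto
        ultimately show ?thesis using p yr False unfolding anc_def d_def E'_def by auto
      qed
    next
      fix x y assume e: "E x y"
      show "anc x y \<or> anc y x"
      proof (cases "x = r \<or> y = r")
        case True
        have "x \<in> V" "y \<in> V" using EV e by auto
        then show ?thesis using True e Esym nbC unfolding anc_def V'_def by auto
      next
        case False
        then have "E' x y" using e unfolding E'_def by auto
        then show ?thesis using I.normal unfolding anc_def by auto
      qed
    next
      fix x assume "x \<in> V" then show "pre x \<le> post x"
        unfolding pre_def post_def using I.pre_post[of x] V'_def by auto
    next
      fix x y assume xy: "x \<in> V" "y \<in> V" "\<not> anc x y" "\<not> anc y x"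
      show "post x < pre y \<or> post y < pre x"
      proof (cases "x = r \<or> y = r")
        case True
        then show ?thesis using xy unfolding anc_def post_def pre_def by auto
      next
        case False
        then have "x \<in> V'" "y \<in> V'" using xy V'_def by auto
        moreover have "\<not> anc' x y" "\<not> anc' y x" using xy unfolding anc_def by auto
        ultimately have "post' x < pre' y \<or> post' y < pre' x" using I.disj by auto
        moreover have "post' x \<le> M" "post' y \<le> M" using postM \<open>x \<in> V'\<close> \<open>y \<in> V'\<close> by auto
        ultimately show ?thesis using False unfolding post_def pre_def by auto
      qed
    qed
    have wt: "\<forall>x y. anc x y \<longrightarrow> d x = 0 \<longrightarrow> w y \<le> w x"
    proof (intro allI impI)
      fix x y assume a: "anc x y" "d x = 0"
      show "w y \<le> w x"
      proof (cases "x = r")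
        case True
        then show ?thesis using a rmax nf nfs.anc_V by metis
      next
        case False
        then have a': "anc' x y" using a unfolding anc_def by auto
        have "x \<notin> C" using a False unfolding d_def by auto
        then have "d' x = 0" using a False unfolding d_def by auto
        have xV': "x \<in> V'" "y \<in> V'" using ancV' a' by auto
        have "\<not> E r x" using \<open>x \<notin> C\<close> \<open>d' x = 0\<close> I.anc_refl[OF xV'(1)] unfolding C_def by auto
        then have "w' x = w x" unfolding w'_def by auto
        moreover have "w' y \<le> w' x" using wt' a' \<open>d' x = 0\<close> by auto
        moreover have "w y \<le> w' y" using wle xV' V'V by auto
        ultimately show ?thesis by auto
      qed
    qed
    show ?thesis using nf wt by blast
  qed
qed


lemma mod_neq_aux: "(a::nat) < b \<Longrightarrow> b - a < K \<Longrightarrow> a mod K \<noteq> b mod K"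
proof
  assume "a < b" "b - a < K" "a mod K = b mod K"
  then have "K dvd b - a" using mod_eq_dvd_iff_nat[of a b K] by auto
  moreover have "0 < b - a" using \<open>a < b\<close> by auto
  ultimately have "K \<le> b - a" using dvd_imp_le by blast
  then show False using \<open>b - a < K\<close> by auto
qed

context nfs begin

lemma ordered_case:
  assumes vw: "anc v w" "v \<noteq> w"
    and Wmax: "\<And>x y. E x y \<Longrightarrow> d y - d x \<le> W"
    and K: "K = (if W \<le> 1 then 0 else W + 1)"
    and Mx: "\<And>x. x \<in> V \<Longrightarrow> post x \<le> Mx"
    and bad: "bad = (\<lambda>j v. \<exists>x. anc x v \<and> x \<noteq> v \<and> d x mod K = j \<and> d v - d x \<le> W \<and> \<not> E x v)"
    and L: "L = (\<lambda>i v. if i = 0 then pre v else if i = 1 then d v else if d v mod K = i - 2 then pre v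
               else if bad (i - 2) v then pre v else 0)"
    and U: "U = (\<lambda>i v. if i = 0 then post v else if i = 1 then d v + W else if d v mod K = i - 2 then pre v
               else if bad (i - 2) v then post v else Mx)"
  shows "E v w \<longleftrightarrow> (\<forall>i<2+K. L i v \<le> U i w \<and> L i w \<le> U i v)"
proof -
  have st: "d v < d w" "pre v < pre w" "post w \<le> post v" using anc_strict[OF vw] by auto
  have VV: "v \<in> V" "w \<in> V" using anc_V[OF vw(1)] by auto
  have pp: "pre v \<le> post v" "pre w \<le> post w" "post v \<le> Mx" "post w \<le> Mx" using pre_post Mx VV by auto
  show ?thesis
  proof
    assume e: "E v w"
    have dW: "d w - d v \<le> W" using Wmax e by auto
    show "\<forall>i<2+K. L i v \<le> U i w \<and> L i w \<le> U i v"
    proof (intro allI impI)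
      fix i assume i: "i < 2 + K"
      show "L i v \<le> U i w \<and> L i w \<le> U i v"
      proof (cases "i < 2")
        case True
        then show ?thesis unfolding L U using st pp dW by auto
      next
        case False
        then have KW: "K = W + 1" "2 \<le> W" using i K by (auto split: if_splits)
        have cne: "d v mod K \<noteq> d w mod K" using mod_neq_aux[of "d v" "d w" K] st dW KW by auto
        have nb: "\<not> bad (d v mod K) w"
        proof
          assume "bad (d v mod K) w"
          then obtain x where x: "anc x w" "x \<noteq> w" "d x mod K = d v mod K" "d w - d x \<le> W" "\<not> E x w"
            unfolding bad by auto
          have "x \<noteq> v" using x(5) e by auto
          have dx: "d x < d w" using anc_strict[OF x(1) x(2)] by auto
          from anc_chain[OF x(1) vw(1)] show False
          proof
            assume "anc x v"
            then have "d x < d v" using anc_strict \<open>x \<noteq> v\<close> by auto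
            then show False using mod_neq_aux[of "d x" "d v" K] x(3) KW st dx x(4) by auto
          next
            assume "anc v x"
            then have "d v < d x" using anc_strict \<open>x \<noteq> v\<close> by auto
            moreover have "d x - d v < K" using KW dx dW by linarith
            ultimately show False using mod_neq_aux[of "d v" "d x" K] x(3) by auto
          qed
        qed
        show ?thesis unfolding L U using False st pp cne nb by auto
      qed
    qed
  next
    assume all: "\<forall>i<2+K. L i v \<le> U i w \<and> L i w \<le> U i v"
    show "E v w"
    proof (rule ccontr)
      assume ne: "\<not> E v w"
      show False
      proof (cases "d w - d v \<le> W")
        case False
        then show False using all[rule_format, of 1] unfolding L U by auto
      next
        case True
        show False
        proof (cases "W \<le> 1")
          case True
          then have "d w = d v + 1" using st \<open>d w - d v \<le> W\<close> by auto
          then obtain p where p: "anc p w" "d p + 1 = d w" "E p w" using parent[OF VV(2)] by auto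
          have "p = v" using anc_unique[OF p(1) vw(1)] p(2) \<open>d w = d v + 1\<close> by auto
          then show False using p ne by auto
        next
          case False
          then have KW: "K = W + 1" using K by auto
          have cne: "d v mod K \<noteq> d w mod K" using mod_neq_aux[of "d v" "d w" K] st \<open>d w - d v \<le> W\<close> KW by auto
          have b: "bad (d v mod K) w" unfolding bad using vw ne \<open>d w - d v \<le> W\<close> by auto
          have "d v mod K < K" using KW by auto
          then have "L (d v mod K + 2) w \<le> U (d v mod K + 2) v" using all by auto
          then show False unfolding L U using cne b st by auto
        qed
      qed
    qed
  qed
qed

end


lemma (in nfs) main:
  assumes fin: "finite V" and EV: "\<And>x y. E x y \<Longrightarrow> x \<in> V \<and> y \<in> V"
    and Esym: "\<And>x y. E x y \<Longrightarrow> E y x"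
  shows "\<exists>W. (\<exists>l u. box_rep V E (if W \<le> 1 then 2 else W + 3) l u)
           \<and> (2 \<le> W \<longrightarrow> (\<exists>cs. simple_cycle V E cs \<and> length cs = W + 1))"
proof -
  define S where "S = (\<lambda>(x,y). d y - d x) ` {(x,y). E x y}"
  have "{(x,y). E x y} \<subseteq> V \<times> V" using EV by auto
  then have "finite {(x,y). E x y}" using fin finite_subset by blast
  then have finS: "finite S" unfolding S_def by auto
  define W where "W = Max (insert 0 S)"
  have Wmax: "\<And>x y. E x y \<Longrightarrow> d y - d x \<le> W"
  proof -
    fix x y assume "E x y"
    then have "d y - d x \<in> S" unfolding S_def by force
    then show "d y - d x \<le> W" unfolding W_def using finS by auto
  qed
  define K where "K = (if W \<le> 1 then 0 else W + 1)"
  define Mx where "Mx = Max (insert 0 (post ` V))"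
  have Mx: "\<And>x. x \<in> V \<Longrightarrow> post x \<le> Mx" unfolding Mx_def using fin by auto
  define bad where "bad = (\<lambda>j v. \<exists>x. anc x v \<and> x \<noteq> v \<and> d x mod K = j \<and> d v - d x \<le> W \<and> \<not> E x v)"
  define L where "L = (\<lambda>i v. if i = 0 then pre v else if i = 1 then d v else if d v mod K = i - 2 then pre v
               else if bad (i - 2) v then pre v else 0)"
  define U where "U = (\<lambda>i v. if i = 0 then post v else if i = 1 then d v + W else if d v mod K = i - 2 then pre v
               else if bad (i - 2) v then post v else Mx)"
  have ord: "\<And>v w. anc v w \<Longrightarrow> v \<noteq> w \<Longrightarrow> E v w \<longleftrightarrow> (\<forall>i<2+K. L i v \<le> U i w \<and> L i w \<le> U i v)"
    using ordered_case[OF _ _ Wmax K_def Mx bad_def L_def U_def] by blast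
  have D: "(if W \<le> 1 then 2 else W + 3) = 2 + K" by (simp add: K_def)
  have box: "box_rep V E (2 + K) (\<lambda>i v. real (L i v)) (\<lambda>i v. real (U i v))"
    unfolding box_rep_def
  proof (intro conjI ballI allI impI)
    fix v i assume "v \<in> V" "i < 2 + K"
    then show "real (L i v) \<le> real (U i v)" unfolding L_def U_def using pre_post[of v] Mx[of v] by auto
  next
    fix v w assume vw: "v \<in> V" "w \<in> V" "v \<noteq> w"
    show "E v w \<longleftrightarrow> (\<forall>i<2 + K. real (L i v) \<le> real (U i w) \<and> real (L i w) \<le> real (U i v))"
    proof (cases "anc v w")
      case True
      then show ?thesis using ord vw by auto
    next
      case False
      show ?thesis
      proof (cases "anc w v")
        case True
        then have "E w v \<longleftrightarrow> (\<forall>i<2+K. L i w \<le> U i v \<and> L i v \<le> U i w)" using ord vw by auto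
        moreover have "E w v \<longleftrightarrow> E v w" using Esym by blast
        ultimately show ?thesis by auto
      next
        case False2: False
        have "\<not> E v w" using normal False False2 by blast
        moreover have "post v < pre w \<or> post w < pre v" using disj vw False False2 by auto
        then have "\<not> (real (L 0 v) \<le> real (U 0 w) \<and> real (L 0 w) \<le> real (U 0 v))"
          unfolding L_def U_def by auto
        then have "\<not> (\<forall>i<2 + K. real (L i v) \<le> real (U i w) \<and> real (L i w) \<le> real (U i v))"
          by (metis add_pos_nonneg zero_less_numeral zero_le)
        ultimately show ?thesis by auto
      qed
    qed
  qed
  have cyc: "2 \<le> W \<longrightarrow> (\<exists>cs. simple_cycle V E cs \<and> length cs = W + 1)"
  proof
    assume W2: "2 \<le> W"
    have "W \<in> insert 0 S" unfolding W_def using finS by (intro Max_in) auto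
    then have "W \<in> S" using W2 by auto
    then obtain x y where xy: "E x y" "d y - d x = W" unfolding S_def by auto
    have "x \<noteq> y" using xy W2 by auto
    have "\<not> anc y x" using anc_strict[of y x] \<open>x \<noteq> y\<close> xy W2 by auto
    then have axy: "anc x y" using normal xy by blast
    have yV: "y \<in> V" using anc_V[OF axy] by auto
    define a where "a = (\<lambda>k. SOME z. anc z y \<and> d z = k)"
    have ak: "\<And>k. k \<le> d y \<Longrightarrow> anc (a k) y \<and> d (a k) = k"
      unfolding a_def using anc_exists[OF yV] by (metis (mono_tags, lifting) someI_ex)
    have dxy: "d x < d y" "d y = d x + W" using xy W2 by auto
    have ax: "a (d x) = x" using ak[of "d x"] anc_unique axy dxy by auto
    have ay: "a (d y) = y" using ak[of "d y"] anc_unique anc_refl yV by auto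
    define cs where "cs = map a [d x..<Suc (d y)]"
    have len: "length cs = W + 1" unfolding cs_def using dxy by auto
    have nth: "\<And>i. i < W + 1 \<Longrightarrow> cs ! i = a (d x + i)" unfolding cs_def using dxy by (simp add: nth_upt del: upt_Suc)
    have "inj_on a {d x..<Suc (d y)}"
      by (rule inj_onI) (metis ak atLeastLessThan_iff less_Suc_eq_le)
    then have dist: "distinct cs" unfolding cs_def by (simp only: distinct_map distinct_upt set_upt)
    have setV: "set cs \<subseteq> V" unfolding cs_def using ak anc_V by (auto, meson less_imp_le_nat)
    have edges: "\<forall>i<length cs. E (cs ! i) (cs ! ((i + 1) mod length cs))"
    proof (intro allI impI)
      fix i assume i: "i < length cs"
      show "E (cs ! i) (cs ! ((i + 1) mod length cs))"
      proof (cases "i < W")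
        case True
        define k where "k = d x + i"
        have k1: "k + 1 \<le> d y" using True dxy k_def by auto
        have z: "anc (a (k+1)) y" "d (a (k+1)) = k + 1" using ak[OF k1] by auto
        have "a (k+1) \<in> V" using anc_V z(1) by auto
        then obtain p where p: "anc p (a (k+1))" "d p + 1 = d (a (k+1))" "E p (a (k+1))"
          using parent z(2) by fastforce
        have "anc p y" using anc_trans p(1) z(1) by blast
        then have "p = a k" using ak[of k] k1 p(2) z(2) anc_unique by auto
        then have "E (a k) (a (k+1))" using p(3) by simp
        moreover have "(i + 1) mod length cs = i + 1" using True len by auto
        ultimately show ?thesis using nth True k_def len by auto
      next
        case False
        then have "i = W" using i len by auto
        then have "(i + 1) mod length cs = 0" using len by auto
        moreover have "cs ! 0 = x" using nth[of 0] ax by auto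
        moreover have "cs ! i = y" using nth[of W] \<open>i = W\<close> dxy ay by auto
        ultimately show ?thesis using Esym xy(1) by auto
      qed
    qed
    have "simple_cycle V E cs" unfolding simple_cycle_def using dist len W2 setV edges by auto
    then show "\<exists>cs. simple_cycle V E cs \<and> length cs = W + 1" using len by blast
  qed
  show ?thesis using box cyc D by metis
qed

theorem theorem13:
  fixes V :: "'a set" and E :: "'a \<Rightarrow> 'a \<Rightarrow> bool" and b :: nat
  assumes "simple_graph V E"
    and "boxicity V E = b"
    and "3 \<le> b"
  shows "\<exists>cs. simple_cycle V E cs \<and> b - 3 \<le> length cs"
proof -
  have fin: "finite V" and EV: "\<And>x y. E x y \<Longrightarrow> x \<in> V \<and> y \<in> V" and Esym: "\<And>x y. E x y \<Longrightarrow> E y x"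
    using assms(1) unfolding simple_graph_def by auto
  obtain anc d pre post where nf: "nfs V E anc d pre post"
    using nf_exists[where w = "\<lambda>_. 0" and V = V and E = E] fin EV Esym by blast
  obtain W l u where box: "box_rep V E (if W \<le> 1 then 2 else W + 3) l u"
    and cyc: "2 \<le> W \<longrightarrow> (\<exists>cs. simple_cycle V E cs \<and> length cs = W + 1)"
    using nfs.main[OF nf fin EV Esym] by blast
  have "boxicity V E \<le> (if W \<le> 1 then 2 else W + 3)"
    unfolding boxicity_def by (rule Least_le) (use box in blast)
  then have bl: "b \<le> (if W \<le> 1 then 2 else W + 3)" using assms(2) by simp
  then have "2 \<le> W" using assms(3) by (auto split: if_splits)
  then obtain cs where "simple_cycle V E cs" "length cs = W + 1" using cyc by blast
  moreover have "b - 3 \<le> W + 1" using bl \<open>2 \<le> W\<close> by auto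
  ultimately show ?thesis by auto
qed

end
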